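(* In the semi-discrete setting described in the context, let $c\in\mathcal{F}(\mathring\Omega_h)$ and let $X$ be a solution of \[\begin{cases}-\partial_tX+AX=c\,\delta_{t=T},\\ X(0)=0,\\ X|_{\Gamma^0}=0,\\ X|_{\Gamma^1}=0.\end{cases}\] Then $X\equiv0$, and consequently $c=0$.
   Context: Let $h>0$, integers $M,N\ge2$, grid $\Omega_h=\{(ih,jh):0\le i\le M,0\le j\le N\}$ with nodes indexed $(i,j)$, interior $\mathring\Omega_h=\{1\le i\le M-1,1\le j\le N-1\}$; $\Gamma^0=\{(0,j):0\le j\le N\}$ and $\Gamma^1=\{(1,j):1\le j\le N-1\}$; functions on $\mathring\Omega_h$ are extended by $0$ on all boundary nodes. $A$ is the 5-point discrete Dirichlet Laplacian $[A\phi]_{(i,j)}=h^{-2}(4\phi_{(i,j)}-\phi_{(i+1,j)}-\phi_{(i-1,j)}-\phi_{(i,j+1)}-\phi_{(i,j-1)})$. The equation with right-hand side $c\,\delta_{t=T}$ is understood in the distributional sense in time: $-\partial_tX+AX=0$ on $[0,T)$ and on $(T,\infty)$, with the jump $X(T^+)-X(T^-)=c$. *)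

theory Defs
  imports "HOL-Analysis.Analysis"
begin

definition interior :: "nat \<Rightarrow> nat \<Rightarrow> (nat \<times> nat) set" where
  "interior M N = {(i, j). 1 \<le> i \<and> i \<le> M - 1 \<and> 1 \<le> j \<and> j \<le> N - 1}"

definition ext0 :: "nat \<Rightarrow> nat \<Rightarrow> (nat \<times> nat \<Rightarrow> real) \<Rightarrow> nat \<times> nat \<Rightarrow> real" where
  "ext0 M N \<phi> p = (if p \<in> interior M N then \<phi> p else 0)"

text \<open>5-point discrete Dirichlet Laplacian (evaluated at interior nodes, where i,j \<ge> 1).\<close>
definition lapA :: "real \<Rightarrow> nat \<Rightarrow> nat \<Rightarrow> (nat \<times> nat \<Rightarrow> real) \<Rightarrow> nat \<times> nat \<Rightarrow> real" where
  "lapA h M N \<phi> p = (case p of (i, j) \<Rightarrow>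
     (4 * ext0 M N \<phi> (i, j) - ext0 M N \<phi> (i + 1, j) - ext0 M N \<phi> (i - 1, j)
        - ext0 M N \<phi> (i, j + 1) - ext0 M N \<phi> (i, j - 1)) / h\<^sup>2)"

end

theory Submission
  imports Defs
begin

theorem theorem2p22:
  fixes h T :: real and M N :: nat
    and X :: "real \<Rightarrow> nat \<times> nat \<Rightarrow> real" and c :: "nat \<times> nat \<Rightarrow> real"
  assumes "h > 0" and "M \<ge> 2" and "N \<ge> 2" and "T > 0"
    and eq_before: "\<And>t p. t \<in> {0..<T} \<Longrightarrow> p \<in> interior M N \<Longrightarrow>
        ((\<lambda>s. X s p) has_real_derivative lapA h M N (X t) p) (at t within {0..<T})"
    and eq_after: "\<And>t p. t > T \<Longrightarrow> p \<in> interior M N \<Longrightarrow>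
        ((\<lambda>s. X s p) has_real_derivative lapA h M N (X t) p) (at t)"
    and jump: "\<And>p. p \<in> interior M N \<Longrightarrow> \<exists>xm xp.
        ((\<lambda>s. X s p) \<longlongrightarrow> xm) (at_left T) \<and> ((\<lambda>s. X s p) \<longlongrightarrow> xp) (at_right T)
        \<and> xp - xm = c p"
    and init: "\<And>p. p \<in> interior M N \<Longrightarrow> X 0 p = 0"
    and gamma0: "\<And>t j. t \<ge> 0 \<Longrightarrow> t \<noteq> T \<Longrightarrow> j \<le> N \<Longrightarrow> ext0 M N (X t) (0, j) = 0"
    and gamma1: "\<And>t j. t \<ge> 0 \<Longrightarrow> t \<noteq> T \<Longrightarrow> 1 \<le> j \<Longrightarrow> j \<le> N - 1 \<Longrightarrow> X t (1, j) = 0"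
  shows "(\<forall>t p. t \<ge> 0 \<longrightarrow> t \<noteq> T \<longrightarrow> p \<in> interior M N \<longrightarrow> X t p = 0)
         \<and> (\<forall>p \<in> interior M N. c p = 0)"

proof -
  have notbot: "at t within {0..<T} \<noteq> bot" if "0 \<le> t" "t < T" for t
    using that \<open>T > 0\<close> by (simp add: trivial_limit_within)
  have dzero: "lapA h M N (X t) p = 0"
    if p: "p \<in> interior M N" and t: "t \<ge> 0" "t \<noteq> T"
      and z: "\<And>s. s \<ge> 0 \<Longrightarrow> s \<noteq> T \<Longrightarrow> X s p = 0" for t p
  proof (cases "t < T")
    case True
    have d1: "((\<lambda>s. X s p) has_real_derivative lapA h M N (X t) p) (at t within {0..<T})"
      using eq_before[OF _ p] True t by auto
    have "((\<lambda>s. 0::real) has_real_derivative 0) (at t within {0..<T})" by simp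
    then have d2: "((\<lambda>s. X s p) has_real_derivative 0) (at t within {0..<T})"
      by (rule has_field_derivative_transform_within[where d=1]) (use True t z in auto)
    show ?thesis using has_field_derivative_unique[OF d1 d2 notbot] True t by auto
  next
    case False
    then have tT: "t > T" using t by auto
    have d1: "((\<lambda>s. X s p) has_real_derivative lapA h M N (X t) p) (at t)"
      using eq_after[OF tT p] .
    have "((\<lambda>s. 0::real) has_real_derivative 0) (at t)" by simp
    then have d2: "((\<lambda>s. X s p) has_real_derivative 0) (at t)"
      by (rule has_field_derivative_transform_within_open[where S="{T<..}"])
         (use tT z \<open>T>0\<close> in auto)
    show ?thesis using DERIV_unique[OF d1 d2] .
  qed
  define Z where "Z i \<longleftrightarrow> (\<forall>t j. t \<ge> 0 \<longrightarrow> t \<noteq> T \<longrightarrow> ext0 M N (X t) (i, j) = 0)" for i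
  have Z0: "Z 0" by (auto simp: Z_def ext0_def interior_def)
  have Z1: "Z 1" using gamma1 by (auto simp: Z_def ext0_def interior_def)
  have step: "Z (Suc (Suc i))" if zi: "Z i" and zi1: "Z (Suc i)" for i
    unfolding Z_def
  proof (intro allI impI)
    fix t j assume t: "(0::real) \<le> t" "t \<noteq> T"
    show "ext0 M N (X t) (Suc (Suc i), j) = 0"
    proof (cases "(Suc (Suc i), j) \<in> interior M N")
      case False then show ?thesis by (simp add: ext0_def)
    next
      case True
      have p: "(Suc i, j) \<in> interior M N" using True by (auto simp: interior_def)
      have zz: "X s (Suc i, j) = 0" if "s \<ge> 0" "s \<noteq> T" for s
        using zi1 that p unfolding Z_def ext0_def by (metis)
      have L: "lapA h M N (X t) (Suc i, j) = 0" using dzero[OF p t zz] by blast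
      have a: "ext0 M N (X t) (Suc i, j) = 0" "ext0 M N (X t) (i, j) = 0"
        "ext0 M N (X t) (Suc i, j + 1) = 0" "ext0 M N (X t) (Suc i, j - 1) = 0"
        using zi zi1 t unfolding Z_def by auto
      from L a \<open>h > 0\<close> show ?thesis by (simp add: lapA_def)
    qed
  qed
  have allZ: "Z i \<and> Z (Suc i)" for i
    by (induction i) (use Z0 Z1 step in auto)
  have X0: "X t p = 0" if "t \<ge> 0" "t \<noteq> T" "p \<in> interior M N" for t p
  proof -
    obtain i j where pij: "p = (i, j)" by force
    have "Z i" using allZ by blast
    then show ?thesis using that pij unfolding Z_def ext0_def by metis
  qed
  have C: "c p = 0" if p: "p \<in> interior M N" for p
  proof -
    obtain xm xp where l: "((\<lambda>s. X s p) \<longlongrightarrow> xm) (at_left T)" "((\<lambda>s. X s p) \<longlongrightarrow> xp) (at_right T)"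
      and e: "xp - xm = c p" using jump[OF p] by blast
    have ev1: "\<forall>\<^sub>F s in at_left T. X s p = 0"
      unfolding eventually_at_left_field using \<open>T > 0\<close>
      by (intro exI[of _ 0]) (auto intro!: X0 p)
    have ev2: "\<forall>\<^sub>F s in at_right T. X s p = 0"
      unfolding eventually_at_right_field using \<open>T > 0\<close>
      by (intro exI[of _ "T+1"]) (auto intro!: X0 p)
    have "((\<lambda>s. X s p) \<longlongrightarrow> 0) (at_left T)"
      using ev1 by (simp add: tendsto_eventually)
    then have "xm = 0" using l(1) tendsto_unique trivial_limit_at_left_real by blast
    have "((\<lambda>s. X s p) \<longlongrightarrow> 0) (at_right T)"
      using ev2 by (simp add: tendsto_eventually)
    then have "xp = 0" using l(2) tendsto_unique trivial_limit_at_right_real by blast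
    show ?thesis using e \<open>xm = 0\<close> \<open>xp = 0\<close> by simp
  qed
  show ?thesis using X0 C by blast
qed

end
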